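(* Let $n,m$ be positive integers (spatial dimensions), let $a,A$ be real numbers with $A\neq-3$ and $$\frac{a+3}{2}=\frac{2}{A+3}.$$ Let $\eta,\mathcal{E}$ be real, let $l,\ell$ be real with $$l+\frac n2-1=\frac{2}{A+3}\left(\ell+\frac m2-1\right),$$ and set $E=-\eta\left(\frac{2}{A+3}\right)^2$, $\xi=-\mathcal{E}\left(\frac{2}{A+3}\right)^2$. Suppose $u\in C^2((0,\infty))$ satisfies the $n$-dimensional radial equation of $U(r)=\xi r^{a+1}$: $$u''(r)+\left[E-\frac{\left(l-\frac32+\frac n2\right)\left(l-\frac12+\frac n2\right)}{r^{2}}-\xi r^{a+1}\right]u(r)=0 .$$ Then $v(\rho)=\rho^{-(A+1)/4}u\!\left(\rho^{(A+3)/2}\right)$ (coordinates $r=\rho^{(A+3)/2}$, $u(r)=\rho^{(A+1)/4}v(\rho)$) satisfies the $m$-dimensional radial equation of $V(\rho)=\eta\rho^{A+1}$: $$v''(\rho)+\left[\mathcal{E}-\frac{\left(\ell-\frac32+\frac m2\right)\left(\ell-\frac12+\frac m2\right)}{\rho^{2}}-\eta\rho^{A+1}\right]v(\rho)=0 .$$ In this sense the $n$-dimensional potential $\xi r^{a+1}$ and the $m$-dimensional potential $\eta\rho^{A+1}$ are quantum Newtonianly dual, bound-state eigenfunctions of $U$ (energy $E$, angular quantum number $l$) being transformed into eigenfunctions of $V$ (energy $\mathcal{E}$, angular quantum number $\ell$).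
   Context: In $d$ spatial dimensions the radial equation for a central potential $W$ (units $\hbar=2m=1$), with $u(r)=rR(r)$ where $R$ is the radial wave function, energy $E$ and angular quantum number $l$, is $u''+\left[E-\frac{(l-\frac32+\frac d2)(l-\frac12+\frac d2)}{r^2}-W(r)\right]u=0$. *)

theory Defs
  imports "HOL-Analysis.Analysis"
begin

end

theory Submission
  imports Defs
begin

lemma chain_pow:
  fixes f :: "real \<Rightarrow> real"
  assumes x: "x > 0" and d: "\<forall>r>0. (f has_real_derivative f' r) (at r)"
  shows "((\<lambda>x. f (x powr p)) has_real_derivative f' (x powr p) * (p * x powr (p - 1))) (at x)"
proof -
  have "x powr p > 0" using x by simp
  then have "(f has_real_derivative f' (x powr p)) (at (x powr p))" using d by blast
  from DERIV_chain2[OF this has_real_derivative_powr[OF x]] show ?thesis .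
qed

theorem mainTheorem4:
  fixes n m :: nat and a A \<eta> EE l ll E \<xi> :: real
    and u :: "real \<Rightarrow> real"
  assumes "n \<ge> 1" and "m \<ge> 1"
    and "A \<noteq> -3"
    and "(a + 3) / 2 = 2 / (A + 3)"
    and "l + real n / 2 - 1 = 2 / (A + 3) * (ll + real m / 2 - 1)"
    and "E = - \<eta> * (2 / (A + 3))^2"
    and "\<xi> = - EE * (2 / (A + 3))^2"
    and "\<forall>r>0. u differentiable (at r)"
    and "\<forall>r>0. deriv u differentiable (at r)"
    and "continuous_on {0<..} (deriv (deriv u))"
    and "\<forall>r>0. deriv (deriv u) r
           + (E - (l - 3/2 + real n / 2) * (l - 1/2 + real n / 2) / r^2
                - \<xi> * r powr (a + 1)) * u r = 0"
  shows "\<forall>\<rho>>0. (\<lambda>\<rho>. \<rho> powr (-(A + 1) / 4) * u (\<rho> powr ((A + 3) / 2))) differentiable (at \<rho>)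
          \<and> deriv (\<lambda>\<rho>. \<rho> powr (-(A + 1) / 4) * u (\<rho> powr ((A + 3) / 2))) differentiable (at \<rho>)
          \<and> deriv (deriv (\<lambda>\<rho>. \<rho> powr (-(A + 1) / 4) * u (\<rho> powr ((A + 3) / 2)))) \<rho>
             + (EE - (ll - 3/2 + real m / 2) * (ll - 1/2 + real m / 2) / \<rho>^2
                 - \<eta> * \<rho> powr (A + 1))
               * (\<rho> powr (-(A + 1) / 4) * u (\<rho> powr ((A + 3) / 2))) = 0"
proof (intro allI impI)
  fix \<rho> :: real assume \<rho>: "\<rho> > 0"
  define p where "p = (A + 3) / 2"
  define k where "k = -(A + 1) / 4"
  define u1 where "u1 = deriv u"
  define u2 where "u2 = deriv (deriv u)"
  define v where "v = (\<lambda>\<rho>. \<rho> powr k * u (\<rho> powr p))"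
  define w where "w = (\<lambda>x. k * x powr (k - 1) * u (x powr p)
        + x powr k * (u1 (x powr p) * (p * x powr (p - 1))))"
  define w2 where "w2 = (\<lambda>x. (k * ((k - 1) * x powr (k - 1 - 1)) * u (x powr p)
        + k * x powr (k - 1) * (u1 (x powr p) * (p * x powr (p - 1))))
        + (k * x powr (k - 1) * (u1 (x powr p) * (p * x powr (p - 1)))
        + x powr k * (u2 (x powr p) * (p * x powr (p - 1)) * (p * x powr (p - 1))
           + u1 (x powr p) * (p * ((p - 1) * x powr (p - 1 - 1))))))"
  have p0: "p \<noteq> 0" using assms(3) unfolding p_def by auto
  have du: "\<forall>r>0. (u has_real_derivative u1 r) (at r)"
    using assms(8) DERIV_deriv_iff_real_differentiable u1_def by blast
  have du1: "\<forall>r>0. (u1 has_real_derivative u2 r) (at r)"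
    using assms(9) DERIV_deriv_iff_real_differentiable u1_def u2_def by blast
  have dv: "(v has_real_derivative w x) (at x)" if x: "x > 0" for x
    unfolding v_def w_def
    by (rule DERIV_cong[OF DERIV_mult[OF has_real_derivative_powr[OF x] chain_pow[OF x du]]])
       (simp add: algebra_simps)
  have dw: "(w has_real_derivative w2 x) (at x)" if x: "x > 0" for x
  proof -
    have d1: "((\<lambda>x. k * x powr (k - 1) * u (x powr p)) has_real_derivative
        k * ((k - 1) * x powr (k - 1 - 1)) * u (x powr p)
        + k * x powr (k - 1) * (u1 (x powr p) * (p * x powr (p - 1)))) (at x)"
      by (rule DERIV_cong[OF DERIV_mult[OF DERIV_cmult[OF has_real_derivative_powr[OF x]] chain_pow[OF x du]]])
         (simp add: algebra_simps)
    have d2: "((\<lambda>x. u1 (x powr p) * (p * x powr (p - 1))) has_real_derivative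
        u2 (x powr p) * (p * x powr (p - 1)) * (p * x powr (p - 1))
           + u1 (x powr p) * (p * ((p - 1) * x powr (p - 1 - 1)))) (at x)"
      by (rule DERIV_cong[OF DERIV_mult[OF chain_pow[OF x du1] DERIV_cmult[OF has_real_derivative_powr[OF x]]]])
         (simp add: algebra_simps)
    have d3: "((\<lambda>x. x powr k * (u1 (x powr p) * (p * x powr (p - 1)))) has_real_derivative
        k * x powr (k - 1) * (u1 (x powr p) * (p * x powr (p - 1)))
        + x powr k * (u2 (x powr p) * (p * x powr (p - 1)) * (p * x powr (p - 1))
           + u1 (x powr p) * (p * ((p - 1) * x powr (p - 1 - 1))))) (at x)"
      by (rule DERIV_cong[OF DERIV_mult[OF has_real_derivative_powr[OF x] d2]])
         (simp add: algebra_simps)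
    show ?thesis unfolding w_def w2_def using DERIV_add[OF d1 d3] by simp
  qed
  have eqd: "deriv v x = w x" if "x > 0" for x using dv[OF that] DERIV_imp_deriv by blast
  have ddv: "(deriv v has_real_derivative w2 \<rho>) (at \<rho>)"
    by (rule has_field_derivative_transform_within_open[OF dw[OF \<rho>], of "{0<..}"])
       (use \<rho> eqd in auto)
  have vdef: "(\<lambda>\<rho>. \<rho> powr (-(A + 1) / 4) * u (\<rho> powr ((A + 3) / 2))) = v"
    unfolding v_def k_def p_def by simp
  have dd: "deriv (deriv v) \<rho> = w2 \<rho>" using ddv DERIV_imp_deriv by blast
  define x where "x = \<rho> powr k"
  define y where "y = \<rho> powr p"
  have y0: "y > 0" and x0: "x > 0" using \<rho> by (auto simp: x_def y_def)
  have e1: "\<rho> powr (k - 1) = x / \<rho>" using \<rho> by (simp add: x_def powr_diff)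
  have e2: "\<rho> powr (k - 1 - 1) = x / \<rho>^2" using \<rho> by (simp add: x_def powr_diff power2_eq_square)
  have e3: "\<rho> powr (p - 1) = y / \<rho>" using \<rho> by (simp add: y_def powr_diff)
  have e4: "\<rho> powr (p - 1 - 1) = y / \<rho>^2" using \<rho> by (simp add: y_def powr_diff power2_eq_square)
  have A1: "A + 1 = p + p - 2" unfolding p_def by simp
  have e5: "\<rho> powr (A + 1) = y^2 / \<rho>^2"
    unfolding A1 using \<rho> by (simp add: y_def powr_diff powr_add[symmetric] power2_eq_square)
  have ip: "2 / (A + 3) = 1 / p" unfolding p_def by simp
  have ap: "p * (a + 1) = 2 - p - p"
  proof -
    have "(a + 3) / 2 = 1 / p" using assms(4) ip by simp
    then have "a + 3 = 2 / p" by (simp add: field_simps)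
    then show ?thesis using p0 by (simp add: field_simps)
  qed
  have e6: "y powr (a + 1) = \<rho>^2 / y^2"
  proof -
    have "y powr (a + 1) = \<rho> powr (2 - (p + p))" unfolding y_def using \<rho> ap by (simp add: powr_powr)
    also have "\<dots> = \<rho>^2 / y^2" using \<rho>
      by (simp add: y_def powr_diff powr_add[symmetric] power2_eq_square powr_numeral)
    finally show ?thesis .
  qed
  have kp: "k = (1 - p) / 2" unfolding k_def p_def by (simp add: field_simps)
  define \<mu> where "\<mu> = ll + real m / 2 - 1"
  have lam: "l + real n / 2 - 1 = \<mu> / p" using assms(5) unfolding ip \<mu>_def by simp
  have L: "(l - 3/2 + real n / 2) * (l - 1/2 + real n / 2) = (\<mu> / p)^2 - 1/4"
  proof -
    have "l = \<mu> / p + 1 - real n / 2" using lam by simp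
    then show ?thesis by (simp add: power2_eq_square algebra_simps)
  qed
  have M: "(ll - 3/2 + real m / 2) * (ll - 1/2 + real m / 2) = \<mu>^2 - 1/4"
    unfolding \<mu>_def by (simp add: power2_eq_square algebra_simps)
  have U2: "u2 y = - (E - ((\<mu> / p)^2 - 1/4) / y^2 - \<xi> * (\<rho>^2 / y^2)) * u y"
  proof -
    have "u2 y + (E - ((\<mu> / p)^2 - 1/4) / y^2 - \<xi> * y powr (a + 1)) * u y = 0"
      using assms(11) y0 unfolding u2_def L by blast
    then show ?thesis unfolding e6 by (simp add: algebra_simps)
  qed
  have EE: "E = - \<eta> / p^2" "\<xi> = - EE / p^2" using assms(6,7) unfolding ip
    by (auto simp: power2_eq_square)
  have alg: "k * ((k - 1) * (x / \<rho>^2)) * u y + k * (x / \<rho>) * (u1 y * (p * (y / \<rho>)))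
     + (k * (x / \<rho>) * (u1 y * (p * (y / \<rho>)))
     + x * ((- (E - ((\<mu> / p)^2 - 1/4) / y^2 - \<xi> * (\<rho>^2 / y^2)) * u y) * (p * (y / \<rho>)) * (p * (y / \<rho>))
         + u1 y * (p * ((p - 1) * (y / \<rho>^2)))))
     + (EE - (\<mu>^2 - 1/4) / \<rho>^2 - \<eta> * (y^2 / \<rho>^2)) * (x * u y) = 0"
    unfolding EE kp using \<rho> y0 p0 by (simp add: field_simps power2_eq_square)
  have fin: "w2 \<rho> + (EE - (ll - 3/2 + real m / 2) * (ll - 1/2 + real m / 2) / \<rho>^2
                 - \<eta> * \<rho> powr (A + 1)) * v \<rho> = 0"
    using alg unfolding w2_def v_def M e5 e1 e2 e3 e4 x_def[symmetric] y_def[symmetric] U2 .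
  show "(\<lambda>\<rho>. \<rho> powr (-(A + 1) / 4) * u (\<rho> powr ((A + 3) / 2))) differentiable (at \<rho>)
          \<and> deriv (\<lambda>\<rho>. \<rho> powr (-(A + 1) / 4) * u (\<rho> powr ((A + 3) / 2))) differentiable (at \<rho>)
          \<and> deriv (deriv (\<lambda>\<rho>. \<rho> powr (-(A + 1) / 4) * u (\<rho> powr ((A + 3) / 2)))) \<rho>
             + (EE - (ll - 3/2 + real m / 2) * (ll - 1/2 + real m / 2) / \<rho>^2
                 - \<eta> * \<rho> powr (A + 1))
               * (\<rho> powr (-(A + 1) / 4) * u (\<rho> powr ((A + 3) / 2))) = 0"
    unfolding vdef dd using fin dv[OF \<rho>] ddv
    by (auto simp: real_differentiable_def v_def k_def p_def)
qed

end
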